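(* For every integer $n\ge 1$, the polytope \[\mathrm{Newt}(U_n)=\sum_{1\le i<j\le n}\mathrm{conv}\{e_i+e_{n+j},\,e_j+e_{n+i}\}\subseteq\mathbb{R}^{2n}\] is unimodularly equivalent to the permutohedron $\Pi_n$.
   Context: Here $e_1,\dots,e_{2n}$ are the standard basis vectors of $\mathbb{R}^{2n}$ and the sum is a Minkowski sum; this is the sum of the Newton polytopes of the binomials $t_it_{n+j}-t_jt_{n+i}$, $1\le i<j\le n$ (the Newton polytope of a polynomial being the convex hull of its exponent vectors). The permutohedron is $\Pi_n=\mathrm{conv}\{(\pi_1,\dots,\pi_n): \pi\in\mathfrak{S}_n\}\subseteq\mathbb{R}^n$. Two polytopes $P,P'\subseteq\mathbb{R}^m$ are unimodularly equivalent if $P'=\{Mx+v: x\in P\}$ for some $M\in \mathrm{GL}_m(\mathbb{Z})$ and $v\in\mathbb{Z}^m$; if $P\subseteq\mathbb{R}^N$ and $P'\subseteq\mathbb{R}^m$ with $N>m$, they are called unimodularly equivalent if $P$ is unimodularly equivalent to $P'\times\{0\}\subseteq\mathbb{R}^N$. *)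

theory Defs
  imports "HOL-Analysis.Analysis"
begin

definition minkowski_sum :: "'i set \<Rightarrow> ('i \<Rightarrow> 'a::comm_monoid_add set) \<Rightarrow> 'a set" where
  "minkowski_sum I A = {(\<Sum>k\<in>I. f k) | f. \<forall>k\<in>I. f k \<in> A k}"

text \<open>R^{2n} is modelled as real^('n + 'n): coordinate Inl i is coordinate i,
  coordinate Inr i is coordinate n+i.\<close>
definition newt_U :: "(real ^ ('n::{finite,linorder} + 'n)) set" where
  "newt_U = minkowski_sum {(i,j). i < j}
     (\<lambda>(i,j). convex hull {axis (Inl i) 1 + axis (Inr j) 1, axis (Inl j) 1 + axis (Inr i) 1})"

definition permutohedron :: "(real ^ ('n::finite)) set" where
  "permutohedron = convex hull {x. \<exists>p. bij_betw p (UNIV::'n set) {1..CARD('n)} \<and>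
                                        x = (\<chi> i. real (p i))}"

definition unimod_equiv :: "(real ^ 'm::finite) set \<Rightarrow> (real ^ 'm) set \<Rightarrow> bool" where
  "unimod_equiv P Q \<longleftrightarrow> (\<exists>(M::int^'m^'m) (M'::int^'m^'m) (v::int^'m).
      M ** M' = mat 1 \<and> M' ** M = mat 1 \<and>
      Q = (\<lambda>x. (\<chi> i j. real_of_int (M $ i $ j)) *v x + (\<chi> i. real_of_int (v $ i))) ` P)"

definition pad_zero :: "real ^ 'n::finite \<Rightarrow> real ^ ('n + 'n)" where
  "pad_zero x = (\<chi> k. case k of Inl i \<Rightarrow> x $ i | Inr _ \<Rightarrow> 0)"

end

theory Submission imports Defs begin

lemma sum_UNIV_Plus: "sum g (UNIV :: ('a::finite + 'b::finite) set) = sum (\<lambda>i. g (Inl i)) UNIV + sum (\<lambda>i. g (Inr i)) UNIV"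
  using sum.Plus[of "UNIV::'a set" "UNIV::'b set" g] by (simp add: comp_def)

definition mM :: "int \<Rightarrow> int^('n::finite + 'n)^('n + 'n)" where
  "mM c = (\<chi> i j. case i of Inl a \<Rightarrow> (case j of Inl b \<Rightarrow> (if a = b then 1 else 0) | Inr b \<Rightarrow> 0)
                          | Inr a \<Rightarrow> (case j of Inl b \<Rightarrow> (if a = b then c else 0) | Inr b \<Rightarrow> (if a = b then 1 else 0)))"

lemma mM_inv: "mM c ** mM (-c) = (mat 1 :: int^('n::finite + 'n)^('n + 'n))"
  unfolding matrix_matrix_mult_def mat_def mM_def vec_eq_iff
proof (intro allI)
  fix i j :: "'n + 'n"
  show "(\<chi> i j. \<Sum>k\<in>UNIV. (\<chi> i j. case i of Inl a \<Rightarrow> (case j of Inl b \<Rightarrow> (if a = b then 1 else 0) | Inr b \<Rightarrow> 0)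
                          | Inr a \<Rightarrow> (case j of Inl b \<Rightarrow> (if a = b then c else 0) | Inr b \<Rightarrow> (if a = b then 1 else 0))) $ i $ k *
       (\<chi> i j. case i of Inl a \<Rightarrow> (case j of Inl b \<Rightarrow> (if a = b then 1 else 0) | Inr b \<Rightarrow> 0)
                          | Inr a \<Rightarrow> (case j of Inl b \<Rightarrow> (if a = b then -c else 0) | Inr b \<Rightarrow> (if a = b then 1 else 0))) $ k $ j) $ i $ j =
         (\<chi> i j. if i = j then 1 else 0) $ i $ j"
    by (cases i; cases j) (auto simp: sum_UNIV_Plus if_distrib[of "\<lambda>x. x * _"] cong: if_cong)
qed

lemma mM_inv': "mM (-c) ** mM c = (mat 1 :: int^('n::finite + 'n)^('n + 'n))"
  using mM_inv[of "-c"] by simp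

definition gmap :: "real^('n::finite) \<Rightarrow> real^('n + 'n)" where
  "gmap x = (\<chi> k. case k of Inl i \<Rightarrow> x$i - 1 | Inr i \<Rightarrow> real CARD('n) - x$i)"

definition vv :: "int^('n::finite + 'n)" where
  "vv = (\<chi> k. case k of Inl i \<Rightarrow> -1 | Inr i \<Rightarrow> int CARD('n))"

lemma affine_eq: "(\<chi> i j. real_of_int (mM (-1) $ i $ j)) *v pad_zero x + (\<chi> i. real_of_int (vv $ i)) = gmap (x::real^'n::finite)"
  unfolding vec_eq_iff
proof
  fix k :: "'n + 'n"
  show "((\<chi> i j. real_of_int (mM (-1) $ i $ j)) *v pad_zero x + (\<chi> i. real_of_int (vv $ i))) $ k = gmap x $ k"
    by (cases k) (auto simp: matrix_vector_mult_def mM_def pad_zero_def vv_def gmap_def sum_UNIV_Plus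
        if_distrib[of "\<lambda>x. x * _"] if_distrib[of real_of_int] cong: if_cong)
qed

definition hlin :: "real^('n::finite) \<Rightarrow> real^('n + 'n)" where
  "hlin x = (\<chi> k. case k of Inl i \<Rightarrow> x$i | Inr i \<Rightarrow> - x$i)"

lemma linear_hlin: "linear hlin"
  by (rule linearI) (auto simp: hlin_def vec_eq_iff split: sum.splits)

lemma gmap_eq: "gmap = (\<lambda>y. (\<chi> k. case k of Inl i \<Rightarrow> -1 | Inr i \<Rightarrow> real CARD('n)) + y) \<circ> (hlin :: real^('n::finite) \<Rightarrow> _)"
  by (auto simp: fun_eq_iff gmap_def hlin_def vec_eq_iff split: sum.splits)

lemma gmap_hull: "gmap ` (convex hull S) = convex hull (gmap ` (S::(real^'n::finite) set))"
  unfolding gmap_eq image_comp[symmetric]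
  by (simp add: convex_hull_linear_image[OF linear_hlin] convex_hull_translation)

definition PP :: "'n::{finite,linorder} \<Rightarrow> 'n \<Rightarrow> real^('n + 'n)" where
  "PP i j = axis (Inl i) 1 + axis (Inr j) 1"
definition QQ :: "'n::{finite,linorder} \<Rightarrow> 'n \<Rightarrow> real^('n + 'n)" where
  "QQ i j = axis (Inl j) 1 + axis (Inr i) 1"

definition TT :: "('n::{finite,linorder} \<Rightarrow> 'n \<Rightarrow> bool) \<Rightarrow> real^('n + 'n)" where
  "TT R = (\<Sum>p\<in>{(i,j). i < j}. (\<lambda>(i,j). if R j i then PP i j else QQ i j) p)"

definition sto :: "('n \<Rightarrow> 'n \<Rightarrow> bool) \<Rightarrow> bool" where
  "sto R \<longleftrightarrow> (\<forall>i. \<not> R i i) \<and> (\<forall>i j k. R i j \<longrightarrow> R j k \<longrightarrow> R i k) \<and> (\<forall>i j. i \<noteq> j \<longrightarrow> R i j \<or> R j i)"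

lemma sto_asym: "sto R \<Longrightarrow> R i j \<Longrightarrow> \<not> R j i"
  unfolding sto_def by blast

lemma sto_tot: "sto R \<Longrightarrow> i < (j::'n::linorder) \<Longrightarrow> \<not> R i j \<Longrightarrow> R j i"
  "sto R \<Longrightarrow> i < (j::'n::linorder) \<Longrightarrow> \<not> R j i \<Longrightarrow> R i j"
  unfolding sto_def by (metis less_irrefl)+

lemma sto_irr: "sto R \<Longrightarrow> \<not> R i i"
  unfolding sto_def by blast

lemma count_Inl:
  fixes R :: "'n::{finite,linorder} \<Rightarrow> 'n \<Rightarrow> bool"
  assumes "sto R"
  shows "card {p\<in>{(i,j). i < j}. (\<lambda>(i,j). R j i \<and> i = k \<or> \<not> R j i \<and> j = k) p} = card {j. R j k}"
proof -
  let ?h = "\<lambda>(i,j). if i = k then j else (i::'n)"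
  have "bij_betw ?h {p\<in>{(i,j). i < j}. (\<lambda>(i,j). R j i \<and> i = k \<or> \<not> R j i \<and> j = k) p} {j. R j k}"
  proof (rule bij_betw_byWitness[where f' = "\<lambda>j. if k < j then (k,j) else (j,k)"])
    show "\<forall>a\<in>{p \<in> {(i, j). i < j}. case p of (i, j) \<Rightarrow> R j i \<and> i = k \<or> \<not> R j i \<and> j = k}.
       (if k < ?h a then (k, ?h a) else (?h a, k)) = a" by auto
    show "\<forall>a'\<in>{j. R j k}. ?h (if k < a' then (k, a') else (a', k)) = a'" by auto
    show "?h ` {p \<in> {(i, j). i < j}. case p of (i, j) \<Rightarrow> R j i \<and> i = k \<or> \<not> R j i \<and> j = k} \<subseteq> {j. R j k}"
      using sto_tot[OF assms] sto_irr[OF assms] by auto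
    show "(\<lambda>j. if k < j then (k,j) else (j,k)) ` {j. R j k} \<subseteq> {p \<in> {(i, j). i < j}. case p of (i, j) \<Rightarrow> R j i \<and> i = k \<or> \<not> R j i \<and> j = k}"
      using sto_asym[OF assms] sto_irr[OF assms] by (auto simp: not_less le_less)
  qed
  then show ?thesis by (rule bij_betw_same_card)
qed

lemma count_Inr:
  fixes R :: "'n::{finite,linorder} \<Rightarrow> 'n \<Rightarrow> bool"
  assumes "sto R"
  shows "card {p\<in>{(i,j). i < j}. (\<lambda>(i,j). R j i \<and> j = k \<or> \<not> R j i \<and> i = k) p} = card {j. R k j}"
proof -
  let ?h = "\<lambda>(i,j). if i = k then j else (i::'n)"
  have "bij_betw ?h {p\<in>{(i,j). i < j}. (\<lambda>(i,j). R j i \<and> j = k \<or> \<not> R j i \<and> i = k) p} {j. R k j}"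
  proof (rule bij_betw_byWitness[where f' = "\<lambda>j. if k < j then (k,j) else (j,k)"])
    show "\<forall>a\<in>{p \<in> {(i, j). i < j}. case p of (i, j) \<Rightarrow> R j i \<and> j = k \<or> \<not> R j i \<and> i = k}.
       (if k < ?h a then (k, ?h a) else (?h a, k)) = a" by auto
    show "\<forall>a'\<in>{j. R k j}. ?h (if k < a' then (k, a') else (a', k)) = a'" by auto
    show "?h ` {p \<in> {(i, j). i < j}. case p of (i, j) \<Rightarrow> R j i \<and> j = k \<or> \<not> R j i \<and> i = k} \<subseteq> {j. R k j}"
      using sto_tot[OF assms] sto_irr[OF assms] by auto
    show "(\<lambda>j. if k < j then (k,j) else (j,k)) ` {j. R k j} \<subseteq> {p \<in> {(i, j). i < j}. case p of (i, j) \<Rightarrow> R j i \<and> j = k \<or> \<not> R j i \<and> i = k}"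
      using sto_asym[OF assms] sto_irr[OF assms] by (auto simp: not_less le_less)
  qed
  then show ?thesis by (rule bij_betw_same_card)
qed

lemma sum_01: "finite A \<Longrightarrow> (\<Sum>p\<in>A. if P p then 1 else 0) = real (card {p\<in>A. P p})"
  by (simp add: sum.inter_filter[symmetric])

lemma ptI: "(if R j i then PP i j else QQ i j) $ Inl k = (if R j i \<and> i = k \<or> \<not> R j i \<and> j = k then 1 else 0)"
  "(if R j i then PP i j else QQ i j) $ Inr k = (if R j i \<and> j = k \<or> \<not> R j i \<and> i = k then 1 else 0)"
  by (auto simp: PP_def QQ_def axis_def)

lemma TT_Inl:
  fixes R :: "'n::{finite,linorder} \<Rightarrow> 'n \<Rightarrow> bool"
  assumes "sto R"
  shows "TT R $ Inl k = real (card {j. R j k})"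
proof -
  have "TT R $ Inl k = (\<Sum>p\<in>{(i,j). i < j}. if (\<lambda>(i,j). R j i \<and> i = k \<or> \<not> R j i \<and> j = k) p then 1 else 0)"
    unfolding TT_def sum_component
    by (intro sum.cong refl) (auto simp: ptI split: prod.splits)
  also have "\<dots> = real (card {j. R j k})"
    using count_Inl[OF assms, of k] by (subst sum_01) simp_all
  finally show ?thesis .
qed

lemma TT_Inr:
  fixes R :: "'n::{finite,linorder} \<Rightarrow> 'n \<Rightarrow> bool"
  assumes "sto R"
  shows "TT R $ Inr k = real (card {j. R k j})"
proof -
  have "TT R $ Inr k = (\<Sum>p\<in>{(i,j). i < j}. if (\<lambda>(i,j). R j i \<and> j = k \<or> \<not> R j i \<and> i = k) p then 1 else 0)"
    unfolding TT_def sum_component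
    by (intro sum.cong refl) (auto simp: ptI split: prod.splits)
  also have "\<dots> = real (card {j. R k j})"
    using count_Inr[OF assms, of k] by (subst sum_01) simp_all
  finally show ?thesis .
qed

lemma sto_sigma: "inj (\<sigma>::'n \<Rightarrow> nat) \<Longrightarrow> sto (\<lambda>j i. \<sigma> j < \<sigma> i)"
  unfolding sto_def by (auto simp: inj_eq) (metis inj_eq nat_neq_iff)

lemma card_below:
  assumes "bij_betw (\<sigma>::'n::finite \<Rightarrow> nat) UNIV {1..CARD('n)}"
  shows "card {j. \<sigma> j < \<sigma> k} = \<sigma> k - 1" "card {j. \<sigma> k < \<sigma> j} = CARD('n) - \<sigma> k"
proof -
  have inj: "inj \<sigma>" and im: "range \<sigma> = {1..CARD('n)}" using assms by (auto simp: bij_betw_def)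
  have "\<sigma> ` {j. \<sigma> j < \<sigma> k} = {1..<\<sigma> k}"
  proof
    show "\<sigma> ` {j. \<sigma> j < \<sigma> k} \<subseteq> {1..<\<sigma> k}" using im by auto
    show "{1..<\<sigma> k} \<subseteq> \<sigma> ` {j. \<sigma> j < \<sigma> k}"
    proof
      fix x assume x: "x \<in> {1..<\<sigma> k}"
      have "\<sigma> k \<le> CARD('n)" using im by auto
      then have "x \<in> range \<sigma>" using x im by auto
      then show "x \<in> \<sigma> ` {j. \<sigma> j < \<sigma> k}" using x by auto
    qed
  qed
  then have "card (\<sigma> ` {j. \<sigma> j < \<sigma> k}) = \<sigma> k - 1" by simp
  then show "card {j. \<sigma> j < \<sigma> k} = \<sigma> k - 1"
    using card_image[OF inj_on_subset[OF inj subset_UNIV]] by metis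
  have "\<sigma> ` {j. \<sigma> k < \<sigma> j} = {\<sigma> k<..CARD('n)}"
  proof
    show "\<sigma> ` {j. \<sigma> k < \<sigma> j} \<subseteq> {\<sigma> k<..CARD('n)}" using im by auto
    show "{\<sigma> k<..CARD('n)} \<subseteq> \<sigma> ` {j. \<sigma> k < \<sigma> j}"
    proof
      fix x assume x: "x \<in> {\<sigma> k<..CARD('n)}"
      have "1 \<le> \<sigma> k" using im by auto
      then have "x \<in> range \<sigma>" using x im by auto
      then show "x \<in> \<sigma> ` {j. \<sigma> k < \<sigma> j}" using x by auto
    qed
  qed
  then have "card (\<sigma> ` {j. \<sigma> k < \<sigma> j}) = CARD('n) - \<sigma> k" by simp
  then show "card {j. \<sigma> k < \<sigma> j} = CARD('n) - \<sigma> k"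
    using card_image[OF inj_on_subset[OF inj subset_UNIV]] by metis
qed

lemma gmap_sigma:
  assumes "bij_betw (\<sigma>::'n::{finite,linorder} \<Rightarrow> nat) UNIV {1..CARD('n)}"
  shows "gmap (\<chi> i. real (\<sigma> i)) = TT (\<lambda>j i. \<sigma> j < \<sigma> i)"
  unfolding vec_eq_iff
proof
  fix k :: "'n + 'n"
  have inj: "inj \<sigma>" and im: "range \<sigma> = {1..CARD('n)}" using assms by (auto simp: bij_betw_def)
  have st: "sto (\<lambda>j i. \<sigma> j < \<sigma> i)" by (rule sto_sigma[OF inj])
  have b: "1 \<le> \<sigma> i" "\<sigma> i \<le> CARD('n)" "Suc 0 \<le> \<sigma> i" for i using im by auto
  show "gmap (\<chi> i. real (\<sigma> i)) $ k = TT (\<lambda>j i. \<sigma> j < \<sigma> i) $ k"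
    by (cases k) (auto simp: gmap_def TT_Inl[OF st] TT_Inr[OF st] card_below[OF assms] of_nat_diff b)
qed

lemma convex_minkowski: "(\<And>k. k \<in> I \<Longrightarrow> convex (A k)) \<Longrightarrow> convex (minkowski_sum I A)"
  unfolding convex_def minkowski_sum_def
proof (clarify)
  fix f g :: "'a \<Rightarrow> 'b" and u v :: real
  assume c: "\<And>k. k \<in> I \<Longrightarrow> \<forall>x\<in>A k. \<forall>y\<in>A k. \<forall>u\<ge>0. \<forall>v\<ge>0. u + v = 1 \<longrightarrow> u *\<^sub>R x + v *\<^sub>R y \<in> A k"
    and f: "\<forall>k\<in>I. f k \<in> A k" and g: "\<forall>k\<in>I. g k \<in> A k" and uv: "0 \<le> u" "0 \<le> v" "u + v = 1"
  show "\<exists>h. u *\<^sub>R sum f I + v *\<^sub>R sum g I = sum h I \<and> (\<forall>k\<in>I. h k \<in> A k)"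
    by (rule exI[of _ "\<lambda>k. u *\<^sub>R f k + v *\<^sub>R g k"])
       (use c f g uv in \<open>auto simp: scaleR_sum_right sum.distrib\<close>)
qed

lemma convex_newt: "convex (newt_U :: (real^('n::{finite,linorder} + 'n)) set)"
  unfolding newt_U_def by (rule convex_minkowski) (auto simp: convex_convex_hull)

lemma TT_in: "TT R \<in> (newt_U :: (real^('n::{finite,linorder} + 'n)) set)"
  unfolding newt_U_def minkowski_sum_def TT_def
  by (rule CollectI, rule exI[of _ "\<lambda>(i,j). if R j i then PP i j else QQ i j"])
     (auto simp: PP_def QQ_def hull_inc)

lemma rank_exists:
  fixes R :: "'n::finite \<Rightarrow> 'n \<Rightarrow> bool"
  assumes st: "sto R"
  shows "\<exists>\<sigma>. bij_betw \<sigma> UNIV {1..CARD('n)} \<and> (\<forall>i j. \<sigma> j < \<sigma> i \<longleftrightarrow> R j i)"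
proof -
  define \<sigma> where "\<sigma> k = Suc (card {j. R j k})" for k
  have mono: "\<sigma> j < \<sigma> i" if "R j i" for i j
  proof -
    have "{x. R x j} \<subset> {x. R x i}"
    proof
      show "{x. R x j} \<subseteq> {x. R x i}" using st that unfolding sto_def by blast
      show "{x. R x j} \<noteq> {x. R x i}" using that sto_irr[OF st] by blast
    qed
    then show ?thesis unfolding \<sigma>_def by (simp add: psubset_card_mono)
  qed
  have iff: "\<sigma> j < \<sigma> i \<longleftrightarrow> R j i" for i j
  proof
    assume a: "\<sigma> j < \<sigma> i"
    show "R j i"
    proof (rule ccontr)
      assume "\<not> R j i"
      moreover have "i \<noteq> j" using a by auto
      ultimately have "R i j" using st unfolding sto_def by blast
      then show False using mono a by fastforce
    qed
  qed (rule mono)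
  have inj: "inj \<sigma>"
  proof (rule injI)
    fix x y assume "\<sigma> x = \<sigma> y"
    moreover have "x \<noteq> y \<Longrightarrow> R x y \<or> R y x" using st unfolding sto_def by blast
    ultimately show "x = y" using mono by fastforce
  qed
  have sub: "range \<sigma> \<subseteq> {1..CARD('n)}"
  proof clarify
    fix k
    have "{j. R j k} \<subseteq> UNIV - {k}" using sto_irr[OF st] by auto
    then have "card {j. R j k} \<le> card (UNIV - {k} :: 'n set)" by (intro card_mono) auto
    also have "\<dots> = CARD('n) - 1" by (simp add: card_Diff_singleton)
    finally have "card {j. R j k} \<le> CARD('n) - 1" .
    moreover have "0 < CARD('n)" by simp
    ultimately have "Suc (card {j. R j k}) \<le> CARD('n)" by linarith
    then show "\<sigma> k \<in> {1..CARD('n)}" unfolding \<sigma>_def by auto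
  qed
  have "card (range \<sigma>) = card {1..CARD('n)}" using card_image[OF inj] by simp
  then have "range \<sigma> = {1..CARD('n)}" using card_subset_eq[OF _ sub] by auto
  then have "bij_betw \<sigma> UNIV {1..CARD('n)}" using inj by (simp add: bij_betw_def)
  then show ?thesis using iff by blast
qed

lemma inner_PP: "a \<bullet> PP i j = a $ Inl i + a $ Inr j" and inner_QQ: "a \<bullet> QQ i j = a $ Inl j + a $ Inr i"
  by (simp_all add: PP_def QQ_def inner_add_right inner_axis)

lemma seg_bound:
  assumes "x \<in> convex hull {PP i j, QQ i j}"
  shows "a \<bullet> x \<le> max (a \<bullet> PP i j) (a \<bullet> QQ i j)"
proof -
  obtain u v where uv: "0 \<le> u" "0 \<le> v" "u + v = 1" and x: "x = u *\<^sub>R PP i j + v *\<^sub>R QQ i j"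
    using assms unfolding convex_hull_2 by blast
  have "a \<bullet> x = u * (a \<bullet> PP i j) + v * (a \<bullet> QQ i j)" by (simp add: x inner_add_right)
  also have "\<dots> \<le> u * max (a \<bullet> PP i j) (a \<bullet> QQ i j) + v * max (a \<bullet> PP i j) (a \<bullet> QQ i j)"
    by (intro add_mono mult_left_mono) (use uv in auto)
  also have "\<dots> = max (a \<bullet> PP i j) (a \<bullet> QQ i j)" using uv by (simp add: distrib_right[symmetric])
  finally show ?thesis .
qed

lemma bound:
  fixes a :: "real^('n::{finite,linorder} + 'n)"
  assumes z: "z \<in> newt_U"
  shows "\<exists>\<sigma>. bij_betw \<sigma> UNIV {1..CARD('n)} \<and> a \<bullet> z \<le> a \<bullet> gmap (\<chi> i. real (\<sigma> i))"
proof -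
  define w where "w k = a $ Inl k - a $ Inr k" for k
  define R where "R j i \<longleftrightarrow> w j < w i \<or> w j = w i \<and> j < i" for j i
  have st: "sto R" unfolding sto_def R_def by auto
  obtain \<sigma> where sb: "bij_betw \<sigma> UNIV {1..CARD('n)}" and iff: "\<And>i j. \<sigma> j < \<sigma> i \<longleftrightarrow> R j i"
    using rank_exists[OF st] by blast
  have "TT R = TT (\<lambda>j i. \<sigma> j < \<sigma> i)" using iff by presburger
  also have "\<dots> = gmap (\<chi> i. real (\<sigma> i))" using gmap_sigma[OF sb] by simp
  finally have T: "TT R = gmap (\<chi> i. real (\<sigma> i))" .
  obtain f where zf: "z = (\<Sum>p\<in>{(i,j). i < j}. f p)"
    and f: "\<forall>p\<in>{(i,j). i < j}. f p \<in> (\<lambda>(i,j). convex hull {PP i j, QQ i j}) p"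
    using z unfolding newt_U_def minkowski_sum_def PP_def QQ_def by blast
  have "a \<bullet> z = (\<Sum>p\<in>{(i,j). i < j}. a \<bullet> f p)" by (simp add: zf inner_sum_right)
  also have "\<dots> \<le> (\<Sum>p\<in>{(i,j). i < j}. a \<bullet> (\<lambda>(i,j). if R j i then PP i j else QQ i j) p)"
  proof (rule sum_mono)
    fix p assume p: "p \<in> {(i::'n, j). i < j}"
    obtain i j where pij: "p = (i,j)" and ij: "i < j" using p by auto
    have "a \<bullet> f p \<le> max (a \<bullet> PP i j) (a \<bullet> QQ i j)"
      using f p pij by (intro seg_bound) auto
    also have "\<dots> = a \<bullet> (if R j i then PP i j else QQ i j)"
      using ij by (auto simp: R_def w_def inner_PP inner_QQ max_def)
    finally show "a \<bullet> f p \<le> a \<bullet> (\<lambda>(i,j). if R j i then PP i j else QQ i j) p" using pij by simp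
  qed
  also have "\<dots> = a \<bullet> TT R" by (simp add: TT_def inner_sum_right)
  finally show ?thesis using T sb by auto
qed

lemma finite_V: "finite {x. \<exists>p. bij_betw p (UNIV::'n::finite set) {1..CARD('n)} \<and> x = (\<chi> i. real (p i))}"
proof (rule finite_subset)
  show "{x. \<exists>p. bij_betw p (UNIV::'n set) {1..CARD('n)} \<and> x = (\<chi> i. real (p i))}
     \<subseteq> (\<lambda>p. \<chi> i. real (p i)) ` (Pi\<^sub>E UNIV (\<lambda>_. {1..CARD('n)}))"
    by (auto simp: bij_betw_def PiE_iff)
  show "finite ((\<lambda>p. \<chi> i. real (p i)) ` (Pi\<^sub>E (UNIV::'n set) (\<lambda>_. {1..CARD('n)})))"
    by (intro finite_imageI finite_PiE) auto
qed

theorem mainTheorem3: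
  shows "unimod_equiv (pad_zero ` (permutohedron :: (real ^ ('n::{finite,linorder})) set))
                      (newt_U :: (real ^ ('n + 'n)) set)"
proof -
  define V where "V = {x. \<exists>p. bij_betw p (UNIV::'n set) {1..CARD('n)} \<and> x = (\<chi> i. real (p i))}"
  have fV: "finite V" unfolding V_def by (rule finite_V)
  have GN: "gmap ` V \<subseteq> (newt_U :: (real ^ ('n + 'n)) set)"
    unfolding V_def using gmap_sigma TT_in by fastforce
  have eq: "newt_U = convex hull (gmap ` V)"
  proof
    show "convex hull (gmap ` V) \<subseteq> newt_U" by (rule hull_minimal) (use GN convex_newt in auto)
    show "newt_U \<subseteq> convex hull (gmap ` V)"
    proof
      fix z :: "real^('n+'n)" assume z: "z \<in> newt_U"
      show "z \<in> convex hull (gmap ` V)"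
      proof (rule ccontr)
        assume nz: "z \<notin> convex hull (gmap ` V)"
        have cl: "closed (convex hull (gmap ` V))"
          by (intro compact_imp_closed finite_imp_compact_convex_hull finite_imageI fV)
        obtain a b where ab: "a \<bullet> z < b" "\<forall>x\<in>convex hull (gmap ` V). b < a \<bullet> x"
          using separating_hyperplane_closed_point[OF convex_convex_hull cl nz] by blast
        obtain \<sigma> where sb: "bij_betw \<sigma> UNIV {1..CARD('n)}"
          and le: "(-a) \<bullet> z \<le> (-a) \<bullet> gmap (\<chi> i. real (\<sigma> i))"
          using bound[OF z, of "-a"] by blast
        have "gmap (\<chi> i. real (\<sigma> i)) \<in> convex hull (gmap ` V)"
          using sb by (intro hull_inc) (auto simp: V_def)
        then show False using ab le by fastforce
      qed
    qed
  qed
  have img: "(\<lambda>x. (\<chi> i j. real_of_int (mM (-1) $ i $ j)) *v x + (\<chi> i. real_of_int (vv $ i))) ` pad_zero ` (permutohedron :: (real ^ ('n::{finite,linorder})) set)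
      = gmap ` (permutohedron :: (real ^ ('n::{finite,linorder})) set)"
    by (simp add: image_image affine_eq)
  show ?thesis
    unfolding unimod_equiv_def
  proof (intro exI conjI)
    show "mM (-1) ** mM 1 = (mat 1 :: int^('n + 'n)^('n + 'n))" using mM_inv[of "-1"] by simp
    show "mM 1 ** mM (-1) = (mat 1 :: int^('n + 'n)^('n + 'n))" using mM_inv[of 1] by simp
    show "newt_U = (\<lambda>x. (\<chi> i j. real_of_int (mM (-1) $ i $ j)) *v x + (\<chi> i. real_of_int (vv $ i))) ` pad_zero ` (permutohedron :: (real ^ ('n::{finite,linorder})) set)"
    proof -
      have "newt_U = gmap ` (permutohedron :: (real ^ ('n::{finite,linorder})) set)"
        unfolding eq permutohedron_def gmap_hull V_def ..
      then show ?thesis using img by simp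
    qed
  qed
qed

end
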